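(* Let $G$ be a nilpotent group of class $5$. Then for all $g,h\in G$ and all $n\in\mathbb{N}$, $$g^n\wedge h = ([g,h]\wedge [g,g,g,h])^{\binom{n}{4}} ([g,h]\wedge [g,g,h])^{\binom{n}{3}} (g\wedge [g,g,g,g,h])^{\binom{n}{5}} (g\wedge [g,g,g,h])^{\binom{n}{4}} (g\wedge [g,g,h])^{\binom{n}{3}} (g\wedge [g,h])^{\binom{n}{2}} (g\wedge h)^n$$ in the exterior square $G\wedge G$.
   Context: Conventions: ${}^g h = ghg^{-1}$, $[g,h]=ghg^{-1}h^{-1}$, and commutators are right normed: $[a,b,c]=[a,[b,c]]$, $[a,b,c,d]=[a,[b,[c,d]]]$, etc. $\binom{n}{r}=0$ if $r>n$. The nonabelian tensor square $G\otimes G$ is generated by symbols $g\otimes h$ subject to $gg'\otimes h=({}^g g'\otimes {}^g h)(g\otimes h)$ and $g\otimes hh'=(g\otimes h)({}^h g\otimes {}^h h')$; the exterior square $G\wedge G$ is its quotient by the subgroup generated by all $x\otimes x$, and $g\wedge h$ denotes the image of $g\otimes h$. *)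

theory Defs
  imports "HOL-Algebra.Algebra"
begin

definition gconj :: "('a, 'b) monoid_scheme \<Rightarrow> 'a \<Rightarrow> 'a \<Rightarrow> 'a" where
  "gconj G g h = g \<otimes>\<^bsub>G\<^esub> h \<otimes>\<^bsub>G\<^esub> inv\<^bsub>G\<^esub> g"

definition gcomm :: "('a, 'b) monoid_scheme \<Rightarrow> 'a \<Rightarrow> 'a \<Rightarrow> 'a" where
  "gcomm G g h = g \<otimes>\<^bsub>G\<^esub> h \<otimes>\<^bsub>G\<^esub> inv\<^bsub>G\<^esub> g \<otimes>\<^bsub>G\<^esub> inv\<^bsub>G\<^esub> h"

text \<open>Lower central series: gamma_1 = G (index 0 here), gamma_{i+1} = [G, gamma_i].\<close>

primrec lower_central :: "('a, 'b) monoid_scheme \<Rightarrow> nat \<Rightarrow> 'a set" where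
  "lower_central G 0 = carrier G"
| "lower_central G (Suc i) =
     generate G {gcomm G x y | x y. x \<in> carrier G \<and> y \<in> lower_central G i}"

definition nilpotent_of_class :: "('a, 'b) monoid_scheme \<Rightarrow> nat \<Rightarrow> bool" where
  "nilpotent_of_class G c \<longleftrightarrow>
     lower_central G c = {\<one>\<^bsub>G\<^esub>} \<and> (\<forall>d<c. lower_central G d \<noteq> {\<one>\<^bsub>G\<^esub>})"

text \<open>Words are lists of letters
  (g, h, b): (g, h, True) stands for the generator g \<wedge> h, (g, h, False) for its inverse.
  ext_rel G is the congruence on words generated by free cancellation and the defining
  relations of the tensor square together with x \<wedge> x = 1.\<close>

inductive ext_rel :: "('a, 'b) monoid_scheme \<Rightarrow> ('a \<times> 'a \<times> bool) list \<Rightarrow> ('a \<times> 'a \<times> bool) list \<Rightarrow> bool"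
  for G where
  refl: "ext_rel G w w"
| sym: "ext_rel G u v \<Longrightarrow> ext_rel G v u"
| trans: "ext_rel G u v \<Longrightarrow> ext_rel G v w \<Longrightarrow> ext_rel G u w"
| cong: "ext_rel G u v \<Longrightarrow> ext_rel G (a @ u @ c) (a @ v @ c)"
| cancel: "ext_rel G [(x, y, b), (x, y, \<not> b)] []"
| rel_left: "\<lbrakk>g \<in> carrier G; g' \<in> carrier G; h \<in> carrier G\<rbrakk> \<Longrightarrow>
    ext_rel G [(g \<otimes>\<^bsub>G\<^esub> g', h, True)] [(gconj G g g', gconj G g h, True), (g, h, True)]"
| rel_right: "\<lbrakk>g \<in> carrier G; h \<in> carrier G; h' \<in> carrier G\<rbrakk> \<Longrightarrow>
    ext_rel G [(g, h \<otimes>\<^bsub>G\<^esub> h', True)] [(g, h, True), (gconj G h g, gconj G h h', True)]"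
| rel_diag: "x \<in> carrier G \<Longrightarrow> ext_rel G [(x, x, True)] []"

definition exterior_square :: "('a, 'b) monoid_scheme \<Rightarrow> ('a \<times> 'a \<times> bool) list set monoid" where
  "exterior_square G =
     \<lparr> carrier = (\<lambda>w. Collect (ext_rel G w)) ` lists (carrier G \<times> carrier G \<times> UNIV),
       monoid.mult = (\<lambda>A B. {w. \<exists>u\<in>A. \<exists>v\<in>B. ext_rel G w (u @ v)}),
       monoid.one = Collect (ext_rel G []) \<rparr>"

definition wedge :: "('a, 'b) monoid_scheme \<Rightarrow> 'a \<Rightarrow> 'a \<Rightarrow> ('a \<times> 'a \<times> bool) list set" where
  "wedge G g h = Collect (ext_rel G [(g, h, True)])"

end

theory Submission
  imports Defs
begin
definition gcentral :: "('a, 'b) monoid_scheme \<Rightarrow> 'a \<Rightarrow> bool" where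
  "gcentral G x \<longleftrightarrow> x \<in> carrier G \<and> (\<forall>y\<in>carrier G. x \<otimes>\<^bsub>G\<^esub> y = y \<otimes>\<^bsub>G\<^esub> x)"

context group begin

lemma cancel1 [simp]: "x \<in> carrier G \<Longrightarrow> y \<in> carrier G \<Longrightarrow> x \<otimes> (inv x \<otimes> y) = y"
  by (simp add: m_assoc[symmetric])
lemma cancel2 [simp]: "x \<in> carrier G \<Longrightarrow> y \<in> carrier G \<Longrightarrow> inv x \<otimes> (x \<otimes> y) = y"
  by (simp add: m_assoc[symmetric])

lemma gcomm_closed [simp]: "x \<in> carrier G \<Longrightarrow> y \<in> carrier G \<Longrightarrow> gcomm G x y \<in> carrier G"
  by (simp add: gcomm_def)
lemma gconj_closed [simp]: "x \<in> carrier G \<Longrightarrow> y \<in> carrier G \<Longrightarrow> gconj G x y \<in> carrier G"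
  by (simp add: gconj_def)

lemmas gexp = gcomm_def gconj_def m_assoc inv_mult_group

lemma hall_witt:
  assumes "a \<in> carrier G" "b \<in> carrier G" "c \<in> carrier G"
  shows "gcomm G (gcomm G a b) (gconj G b c) \<otimes> gcomm G (gcomm G b c) (gconj G c a)
     \<otimes> gcomm G (gcomm G c a) (gconj G a b) = \<one>"
  using assms by (simp add: gexp)

lemma central_closed: "gcentral G x \<Longrightarrow> x \<in> carrier G" by (simp add: gcentral_def)
lemma central_comm: "gcentral G x \<Longrightarrow> y \<in> carrier G \<Longrightarrow> x \<otimes> y = y \<otimes> x" by (simp add: gcentral_def)

lemma central_gcomm_one: "gcentral G x \<Longrightarrow> y \<in> carrier G \<Longrightarrow> gcomm G x y = \<one>"
  "gcentral G x \<Longrightarrow> y \<in> carrier G \<Longrightarrow> gcomm G y x = \<one>"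
proof -
  assume a: "gcentral G x" "y \<in> carrier G"
  then have x: "x \<in> carrier G" and c: "x \<otimes> y = y \<otimes> x" by (auto simp: gcentral_def)
  show "gcomm G x y = \<one>" unfolding gcomm_def using x a(2) c by (simp add: m_assoc)
  have "gcomm G y x = x \<otimes> y \<otimes> inv y \<otimes> inv x" unfolding gcomm_def using c by simp
  also have "\<dots> = \<one>" using x a(2) by (simp add: m_assoc)
  finally show "gcomm G y x = \<one>" .
qed

lemma central_gconj: "gcentral G x \<Longrightarrow> y \<in> carrier G \<Longrightarrow> gconj G y x = x"
  by (auto simp: gcentral_def gconj_def m_assoc)

lemma central_gconj2: "gcentral G x \<Longrightarrow> y \<in> carrier G \<Longrightarrow> gconj G x y = y"
proof -
  assume a: "gcentral G x" "y \<in> carrier G"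
  then have x: "x \<in> carrier G" by (simp add: gcentral_def)
  have "gconj G x y = y \<otimes> x \<otimes> inv x" unfolding gconj_def using central_comm[OF a] by simp
  also have "\<dots> = y" using x a(2) by (simp add: m_assoc)
  finally show ?thesis .
qed

lemma central_inv: "gcentral G x \<Longrightarrow> gcentral G (inv x)"
proof -
  assume a: "gcentral G x"
  then have x: "x \<in> carrier G" by (simp add: gcentral_def)
  have "inv x \<otimes> y = y \<otimes> inv x" if y: "y \<in> carrier G" for y
  proof -
    have "x \<otimes> inv y = inv y \<otimes> x" using a y by (simp add: gcentral_def)
    then have "inv (x \<otimes> inv y) = inv (inv y \<otimes> x)" by simp
    then show ?thesis using x y by (simp add: inv_mult_group)
  qed
  then show ?thesis using x by (simp add: gcentral_def)
qed

lemma central_mult: "gcentral G x \<Longrightarrow> gcentral G y \<Longrightarrow> gcentral G (x \<otimes> y)"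
proof -
  assume a: "gcentral G x" "gcentral G y"
  then have x: "x \<in> carrier G" and y: "y \<in> carrier G" by (auto simp: gcentral_def)
  have "x \<otimes> y \<otimes> z = z \<otimes> (x \<otimes> y)" if z: "z \<in> carrier G" for z
  proof -
    have "x \<otimes> y \<otimes> z = x \<otimes> (y \<otimes> z)" using x y z by (simp add: m_assoc)
    also have "\<dots> = x \<otimes> (z \<otimes> y)" using central_comm[OF a(2) z] by simp
    also have "\<dots> = (x \<otimes> z) \<otimes> y" using x y z by (simp add: m_assoc)
    also have "\<dots> = (z \<otimes> x) \<otimes> y" using central_comm[OF a(1) z] by simp
    also have "\<dots> = z \<otimes> (x \<otimes> y)" using x y z by (simp add: m_assoc)
    finally show ?thesis .
  qed
  then show ?thesis using x y by (simp add: gcentral_def)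
qed

lemma central_one: "gcentral G \<one>" by (simp add: gcentral_def)

lemma comm_one_central: "x \<in> carrier G \<Longrightarrow> (\<And>y. y \<in> carrier G \<Longrightarrow> gcomm G y x = \<one>) \<Longrightarrow> gcentral G x"
proof -
  assume x: "x \<in> carrier G" and h: "\<And>y. y \<in> carrier G \<Longrightarrow> gcomm G y x = \<one>"
  have "x \<otimes> y = y \<otimes> x" if y: "y \<in> carrier G" for y
  proof -
    have "(y \<otimes> x) \<otimes> (inv y \<otimes> inv x) = \<one>" using h[OF y] x y by (simp add: gcomm_def m_assoc)
    then have "inv (inv y \<otimes> inv x) = y \<otimes> x" by (rule inv_equality) (use x y in auto)
    then show ?thesis using x y by (simp add: inv_mult_group)
  qed
  then show ?thesis using x by (simp add: gcentral_def)
qed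

end

definition C4 :: "('a, 'b) monoid_scheme \<Rightarrow> 'a \<Rightarrow> bool" where
  "C4 G z \<longleftrightarrow> z \<in> carrier G \<and> (\<forall>y\<in>carrier G. gcentral G (gcomm G y z))"
definition C3 :: "('a, 'b) monoid_scheme \<Rightarrow> 'a \<Rightarrow> bool" where
  "C3 G z \<longleftrightarrow> z \<in> carrier G \<and> (\<forall>y\<in>carrier G. C4 G (gcomm G y z))"

context group begin

lemma lc_carrier: "lower_central G i \<subseteq> carrier G"
proof (induction i)
  case 0 then show ?case by simp
next
  case (Suc i)
  have "{gcomm G x y | x y. x \<in> carrier G \<and> y \<in> lower_central G i} \<subseteq> carrier G"
    using Suc by auto
  then show ?case by (simp add: generate_incl)
qed

lemma lc_comm: "x \<in> carrier G \<Longrightarrow> y \<in> lower_central G i \<Longrightarrow> gcomm G x y \<in> lower_central G (Suc i)"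
  by (auto intro: generate.incl)

lemma gcomm_swap: "a \<in> carrier G \<Longrightarrow> b \<in> carrier G \<Longrightarrow> gcomm G a b = inv (gcomm G b a)"
  by (simp add: gexp)

lemma comm_gconj: "y \<in> carrier G \<Longrightarrow> u \<in> carrier G \<Longrightarrow> z \<in> carrier G \<Longrightarrow>
   gcomm G y (gconj G u z) = gconj G u (gcomm G (gconj G (inv u) y) z)"
  by (simp add: gexp)

lemma C4_carrier: "C4 G z \<Longrightarrow> z \<in> carrier G" by (simp add: C4_def)
lemma C3_carrier: "C3 G z \<Longrightarrow> z \<in> carrier G" by (simp add: C3_def)

lemma C4_conj: assumes "C4 G z" "u \<in> carrier G" shows "C4 G (gconj G u z)"
proof -
  have z: "z \<in> carrier G" using assms by (simp add: C4_def)
  have "gcentral G (gcomm G y (gconj G u z))" if y: "y \<in> carrier G" for y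
  proof -
    have c: "gcentral G (gcomm G (gconj G (inv u) y) z)" using assms y by (simp add: C4_def)
    show ?thesis using comm_gconj[OF y assms(2) z] central_gconj[OF c assms(2)] c by simp
  qed
  then show ?thesis using z assms(2) by (simp add: C4_def)
qed

lemma C3_conj: assumes "C3 G z" "u \<in> carrier G" shows "C3 G (gconj G u z)"
proof -
  have z: "z \<in> carrier G" using assms by (simp add: C3_def)
  have "C4 G (gcomm G y (gconj G u z))" if y: "y \<in> carrier G" for y
  proof -
    have c: "C4 G (gcomm G (gconj G (inv u) y) z)" using assms y by (simp add: C3_def)
    show ?thesis using comm_gconj[OF y assms(2) z] C4_conj[OF c assms(2)] by simp
  qed
  then show ?thesis using z assms(2) by (simp add: C3_def)
qed

lemma C4_comm_left: assumes "C4 G w" "t \<in> carrier G" shows "gcentral G (gcomm G w t)"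
proof -
  have w: "w \<in> carrier G" using assms by (simp add: C4_def)
  have "gcentral G (gcomm G t w)" using assms by (simp add: C4_def)
  then show ?thesis using gcomm_swap[OF w assms(2)] central_inv by simp
qed

lemma C4_comm_inv_left: assumes "C4 G w" "t \<in> carrier G" shows "gcentral G (gcomm G (inv w) t)"
proof -
  have w: "w \<in> carrier G" using assms by (simp add: C4_def)
  have c: "gcentral G (gcomm G t w)" using assms by (simp add: C4_def)
  have "gcomm G (inv w) t = gconj G (inv w) (gcomm G t w)" using w assms(2) by (simp add: gexp)
  then show ?thesis using central_gconj[OF c] w c by simp
qed

lemma conj_back: "y \<in> carrier G \<Longrightarrow> z \<in> carrier G \<Longrightarrow> gconj G y (gconj G (inv y) z) = z"
  by (simp add: gexp)

lemma G5: assumes "C4 G z" "x \<in> carrier G" "y \<in> carrier G"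
  shows "gcomm G (gcomm G x y) z = \<one>"
proof -
  define c where "c = gconj G (inv y) z"
  have z: "z \<in> carrier G" using assms by (simp add: C4_def)
  have cC: "C4 G c" unfolding c_def using C4_conj assms by simp
  have c: "c \<in> carrier G" using cC by (simp add: C4_def)
  have hw: "gcomm G (gcomm G x y) (gconj G y c) \<otimes> gcomm G (gcomm G y c) (gconj G c x)
     \<otimes> gcomm G (gcomm G c x) (gconj G x y) = \<one>" using hall_witt[OF assms(2,3) c] by simp
  have e1: "gconj G y c = z" unfolding c_def using conj_back assms z by simp
  have k2: "gcentral G (gcomm G y c)" using cC assms by (simp add: C4_def)
  have T2: "gcomm G (gcomm G y c) (gconj G c x) = \<one>" using central_gcomm_one(1)[OF k2] c assms by simp
  have k3: "gcentral G (gcomm G c x)" using C4_comm_left[OF cC assms(2)] .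
  have T3: "gcomm G (gcomm G c x) (gconj G x y) = \<one>" using central_gcomm_one(1)[OF k3] c assms by simp
  show ?thesis using hw e1 T2 T3 assms z by simp
qed

lemma G6: assumes "C3 G z" "x \<in> carrier G" "y \<in> carrier G"
  shows "gcentral G (gcomm G (gcomm G x y) z)"
proof -
  define c where "c = gconj G (inv y) z"
  have z: "z \<in> carrier G" using assms by (simp add: C3_def)
  have cC: "C3 G c" unfolding c_def using C3_conj assms by simp
  have c: "c \<in> carrier G" using cC by (simp add: C3_def)
  have hw: "gcomm G (gcomm G x y) (gconj G y c) \<otimes> gcomm G (gcomm G y c) (gconj G c x)
     \<otimes> gcomm G (gcomm G c x) (gconj G x y) = \<one>" using hall_witt[OF assms(2,3) c] by simp
  have e1: "gconj G y c = z" unfolding c_def using conj_back assms z by simp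
  have k2: "C4 G (gcomm G y c)" using cC assms by (simp add: C3_def)
  have T2: "gcentral G (gcomm G (gcomm G y c) (gconj G c x))" using C4_comm_left[OF k2] c assms by simp
  have k3: "C4 G (gcomm G x c)" using cC assms by (simp add: C3_def)
  have e3: "gcomm G c x = inv (gcomm G x c)" using gcomm_swap[OF c assms(2)] by simp
  have T3: "gcentral G (gcomm G (gcomm G c x) (gconj G x y))" using C4_comm_inv_left[OF k3] e3 assms by simp
  define T1 where "T1 = gcomm G (gcomm G x y) z"
  have T1c: "T1 \<in> carrier G" unfolding T1_def using assms z by simp
  define S where "S = gcomm G (gcomm G y c) (gconj G c x) \<otimes> gcomm G (gcomm G c x) (gconj G x y)"
  have Sc: "gcentral G S" unfolding S_def using T2 T3 central_mult by simp
  have "T1 \<otimes> S = \<one>" using hw e1 unfolding T1_def S_def using assms c z by (simp add: m_assoc del: gcomm_def)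
  then have "T1 = inv S" using T1c central_closed[OF Sc] by (simp add: inv_equality[symmetric] inv_char)
  then show ?thesis using central_inv[OF Sc] unfolding T1_def by simp
qed

end

definition cls :: "('a, 'b) monoid_scheme \<Rightarrow> ('a \<times> 'a \<times> bool) list \<Rightarrow> ('a \<times> 'a \<times> bool) list set" where
  "cls G w = Collect (ext_rel G w)"

definition act :: "('a, 'b) monoid_scheme \<Rightarrow> 'a \<Rightarrow> ('a \<times> 'a \<times> bool) list \<Rightarrow> ('a \<times> 'a \<times> bool) list" where
  "act G x w = map (\<lambda>(a, b, t). (gconj G x a, gconj G x b, t)) w"

definition alpha :: "('a, 'b) monoid_scheme \<Rightarrow> 'a \<Rightarrow> ('a \<times> 'a \<times> bool) list set \<Rightarrow> ('a \<times> 'a \<times> bool) list set" where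
  "alpha G x A = {v. \<exists>u\<in>A. ext_rel G v (act G x u)}"

definition winv :: "('a \<times> 'a \<times> bool) list \<Rightarrow> ('a \<times> 'a \<times> bool) list" where
  "winv w = rev (map (\<lambda>(a, b, t). (a, b, \<not> t)) w)"

abbreviation LC :: "('a, 'b) monoid_scheme \<Rightarrow> ('a \<times> 'a \<times> bool) list set" where
  "LC G \<equiv> lists (carrier G \<times> carrier G \<times> UNIV)"

lemma rel_app: "ext_rel G u v \<Longrightarrow> ext_rel G u' v' \<Longrightarrow> ext_rel G (u @ u') (v @ v')"
proof -
  assume a: "ext_rel G u v" "ext_rel G u' v'"
  have "ext_rel G ([] @ u @ u') ([] @ v @ u')" by (rule ext_rel.cong[OF a(1)])
  moreover have "ext_rel G (v @ u' @ []) (v @ v' @ [])" by (rule ext_rel.cong[OF a(2)])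
  ultimately show ?thesis by (auto intro: ext_rel.trans)
qed

lemma cls_eq_iff: "cls G u = cls G v \<longleftrightarrow> ext_rel G u v"
proof
  assume "cls G u = cls G v"
  then have "v \<in> cls G u" by (auto simp: cls_def intro: ext_rel.refl)
  then show "ext_rel G u v" by (simp add: cls_def)
next
  assume a: "ext_rel G u v"
  show "cls G u = cls G v" unfolding cls_def
    using a by (auto intro: ext_rel.trans ext_rel.sym)
qed

lemma E_mult: "cls G u \<otimes>\<^bsub>exterior_square G\<^esub> cls G v = cls G (u @ v)"
proof -
  have "{w. \<exists>u'\<in>cls G u. \<exists>v'\<in>cls G v. ext_rel G w (u' @ v')} = cls G (u @ v)"
  proof (rule equalityI; rule subsetI)
    fix w assume "w \<in> {w. \<exists>u'\<in>cls G u. \<exists>v'\<in>cls G v. ext_rel G w (u' @ v')}"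
    then obtain u' v' where "ext_rel G u u'" "ext_rel G v v'" "ext_rel G w (u' @ v')"
      by (auto simp: cls_def)
    then have "ext_rel G (u @ v) w" by (meson ext_rel.sym ext_rel.trans rel_app)
    then show "w \<in> cls G (u @ v)" by (simp add: cls_def)
  next
    fix w assume "w \<in> cls G (u @ v)"
    then have "ext_rel G w (u @ v)" by (simp add: cls_def ext_rel.sym)
    then show "w \<in> {w. \<exists>u'\<in>cls G u. \<exists>v'\<in>cls G v. ext_rel G w (u' @ v')}"
      by (auto simp: cls_def intro: ext_rel.refl)
  qed
  then show ?thesis by (simp add: exterior_square_def)
qed

lemma E_one: "\<one>\<^bsub>exterior_square G\<^esub> = cls G []"
  by (simp add: exterior_square_def cls_def)

lemma E_carrier: "carrier (exterior_square G) = cls G ` LC G"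
  by (simp add: exterior_square_def cls_def[abs_def])

lemma winv_r: "ext_rel G (w @ winv w) []"
proof (induction w)
  case Nil then show ?case by (simp add: winv_def ext_rel.refl)
next
  case (Cons l w)
  obtain a b t where l: "l = (a, b, t)" by (cases l)
  have "ext_rel G ([l] @ (w @ winv w) @ [(a, b, \<not> t)]) ([l] @ [] @ [(a, b, \<not> t)])"
    by (rule ext_rel.cong[OF Cons])
  then have "ext_rel G (l # w @ winv w @ [(a, b, \<not> t)]) [(a, b, t), (a, b, \<not> t)]" by (simp add: l)
  moreover have "ext_rel G [(a, b, t), (a, b, \<not> t)] []" by (rule ext_rel.cancel)
  ultimately show ?case by (auto simp: winv_def l intro: ext_rel.trans)
qed

lemma winv_l: "ext_rel G (winv w @ w) []"
proof (induction w rule: rev_induct)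
  case Nil then show ?case by (simp add: winv_def ext_rel.refl)
next
  case (snoc l w)
  obtain a b t where l: "l = (a, b, t)" by (cases l)
  have "ext_rel G ([(a, b, \<not> t)] @ (winv w @ w) @ [l]) ([(a, b, \<not> t)] @ [] @ [l])"
    by (rule ext_rel.cong[OF snoc])
  then have "ext_rel G ((a, b, \<not> t) # winv w @ w @ [l]) [(a, b, \<not> t), (a, b, \<not> \<not> t)]" by (simp add: l)
  moreover have "ext_rel G [(a, b, \<not> t), (a, b, \<not> \<not> t)] []" by (rule ext_rel.cancel)
  ultimately show ?case by (auto simp: winv_def l intro: ext_rel.trans)
qed

lemma winv_LC: "w \<in> LC G \<Longrightarrow> winv w \<in> LC G"
  by (auto simp: winv_def)

lemma group_E: "group (exterior_square G)"
proof (rule groupI)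
  fix x y assume "x \<in> carrier (exterior_square G)" "y \<in> carrier (exterior_square G)"
  then obtain u v where "u \<in> LC G" "v \<in> LC G" "x = cls G u" "y = cls G v" by (auto simp: E_carrier)
  then show "x \<otimes>\<^bsub>exterior_square G\<^esub> y \<in> carrier (exterior_square G)"
    by (simp add: E_mult E_carrier)
next
  show "\<one>\<^bsub>exterior_square G\<^esub> \<in> carrier (exterior_square G)"
    by (auto simp: E_one E_carrier)
next
  fix x y z assume "x \<in> carrier (exterior_square G)" "y \<in> carrier (exterior_square G)"
     "z \<in> carrier (exterior_square G)"
  then obtain u v w where "x = cls G u" "y = cls G v" "z = cls G w" by (auto simp: E_carrier)
  then show "x \<otimes>\<^bsub>exterior_square G\<^esub> y \<otimes>\<^bsub>exterior_square G\<^esub> z =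
      x \<otimes>\<^bsub>exterior_square G\<^esub> (y \<otimes>\<^bsub>exterior_square G\<^esub> z)"
    by (simp add: E_mult)
next
  fix x assume "x \<in> carrier (exterior_square G)"
  then obtain u where "x = cls G u" by (auto simp: E_carrier)
  then show "\<one>\<^bsub>exterior_square G\<^esub> \<otimes>\<^bsub>exterior_square G\<^esub> x = x"
    by (simp add: E_mult E_one)
next
  fix x assume "x \<in> carrier (exterior_square G)"
  then obtain u where u: "u \<in> LC G" "x = cls G u" by (auto simp: E_carrier)
  have "cls G (winv u) \<in> carrier (exterior_square G)" using winv_LC[OF u(1)] by (simp add: E_carrier)
  moreover have "cls G (winv u) \<otimes>\<^bsub>exterior_square G\<^esub> x = \<one>\<^bsub>exterior_square G\<^esub>"
    using u winv_l by (simp add: E_mult E_one cls_eq_iff)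
  ultimately show "\<exists>y\<in>carrier (exterior_square G). y \<otimes>\<^bsub>exterior_square G\<^esub> x = \<one>\<^bsub>exterior_square G\<^esub>"
    by blast
qed

lemma wedge_cls: "wedge G a b = cls G [(a, b, True)]"
  by (simp add: wedge_def cls_def)

lemma wedge_closed: "a \<in> carrier G \<Longrightarrow> b \<in> carrier G \<Longrightarrow> wedge G a b \<in> carrier (exterior_square G)"
  by (auto simp: wedge_cls E_carrier)

lemma E_inv_cls: "u \<in> LC G \<Longrightarrow> inv\<^bsub>exterior_square G\<^esub> (cls G u) = cls G (winv u)"
proof -
  assume u: "u \<in> LC G"
  interpret E: group "exterior_square G" by (rule group_E)
  have "cls G (winv u) \<otimes>\<^bsub>exterior_square G\<^esub> cls G u = \<one>\<^bsub>exterior_square G\<^esub>"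
    using winv_l by (simp add: E_mult E_one cls_eq_iff)
  then show ?thesis
    using u winv_LC[OF u] by (intro E.inv_equality) (auto simp: E_carrier)
qed

context group begin
lemma gconj_mult: "x \<in> carrier G \<Longrightarrow> a \<in> carrier G \<Longrightarrow> b \<in> carrier G \<Longrightarrow>
  gconj G x (a \<otimes> b) = gconj G x a \<otimes> gconj G x b" by (simp add: gexp)
lemma gconj_gconj: "x \<in> carrier G \<Longrightarrow> a \<in> carrier G \<Longrightarrow> b \<in> carrier G \<Longrightarrow>
  gconj G x (gconj G a b) = gconj G (gconj G x a) (gconj G x b)" by (simp add: gexp)
lemma gconj_comp: "x \<in> carrier G \<Longrightarrow> y \<in> carrier G \<Longrightarrow> a \<in> carrier G \<Longrightarrow>
  gconj G x (gconj G y a) = gconj G (x \<otimes> y) a" by (simp add: gexp)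
lemma gconj_one: "a \<in> carrier G \<Longrightarrow> gconj G \<one> a = a" by (simp add: gexp)
end

lemma act_append: "act G x (u @ v) = act G x u @ act G x v" by (simp add: act_def)

lemma act_rel: assumes "group G" "x \<in> carrier G" "ext_rel G u v" shows "ext_rel G (act G x u) (act G x v)"
  using assms(3)
proof (induction rule: ext_rel.induct)
  case (refl w) then show ?case by (rule ext_rel.refl)
next
  case (sym u v) then show ?case by (blast intro: ext_rel.sym)
next
  case (trans u v w) then show ?case by (blast intro: ext_rel.trans)
next
  case (cong u v a c) then show ?case by (simp add: act_append ext_rel.cong)
next
  case (cancel a b c) then show ?case by (simp add: act_def ext_rel.cancel)
next
  case (rel_left g g' h)
  interpret group G by fact
  have e1: "act G x [(g \<otimes>\<^bsub>G\<^esub> g', h, True)] = [(gconj G x g \<otimes>\<^bsub>G\<^esub> gconj G x g', gconj G x h, True)]"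
    using rel_left assms(2) by (simp add: act_def gconj_mult)
  have e2: "act G x [(gconj G g g', gconj G g h, True), (g, h, True)] =
     [(gconj G (gconj G x g) (gconj G x g'), gconj G (gconj G x g) (gconj G x h), True), (gconj G x g, gconj G x h, True)]"
    using rel_left assms(2) by (simp add: act_def gconj_gconj[of x g g'] gconj_gconj[of x g h])
  show ?case unfolding e1 e2 by (rule ext_rel.rel_left) (use rel_left assms(2) in simp_all)
next
  case (rel_right g h h')
  interpret group G by fact
  have e1: "act G x [(g, h \<otimes>\<^bsub>G\<^esub> h', True)] = [(gconj G x g, gconj G x h \<otimes>\<^bsub>G\<^esub> gconj G x h', True)]"
    using rel_right assms(2) by (simp add: act_def gconj_mult)
  have e2: "act G x [(g, h, True), (gconj G h g, gconj G h h', True)] =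
     [(gconj G x g, gconj G x h, True), (gconj G (gconj G x h) (gconj G x g), gconj G (gconj G x h) (gconj G x h'), True)]"
    using rel_right assms(2) by (simp add: act_def gconj_gconj[of x h g] gconj_gconj[of x h h'])
  show ?case unfolding e1 e2 by (rule ext_rel.rel_right) (use rel_right assms(2) in simp_all)
next
  case (rel_diag y)
  interpret group G by fact
  have e1: "act G x [(y, y, True)] = [(gconj G x y, gconj G x y, True)]" by (simp add: act_def)
  show ?case unfolding e1 by (simp add: act_def ext_rel.rel_diag rel_diag assms(2))
qed

lemma alpha_cls: assumes "group G" "x \<in> carrier G" shows "alpha G x (cls G u) = cls G (act G x u)"
proof (rule equalityI; rule subsetI)
  fix w assume "w \<in> alpha G x (cls G u)"
  then obtain u' where "ext_rel G u u'" "ext_rel G w (act G x u')" by (auto simp: alpha_def cls_def)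
  then have "ext_rel G (act G x u) w" using act_rel[OF assms] by (meson ext_rel.sym ext_rel.trans)
  then show "w \<in> cls G (act G x u)" by (simp add: cls_def)
next
  fix w assume "w \<in> cls G (act G x u)"
  then show "w \<in> alpha G x (cls G u)" unfolding alpha_def cls_def
    by (auto intro: ext_rel.sym ext_rel.refl)
qed

lemma act_LC: "group G \<Longrightarrow> x \<in> carrier G \<Longrightarrow> u \<in> LC G \<Longrightarrow> act G x u \<in> LC G"
proof -
  assume a: "group G" "x \<in> carrier G" "u \<in> LC G"
  then show ?thesis by (induction u) (auto simp: act_def group.gconj_closed[OF a(1)])
qed

lemma act_comp: "group G \<Longrightarrow> x \<in> carrier G \<Longrightarrow> y \<in> carrier G \<Longrightarrow> u \<in> LC G \<Longrightarrow>
   act G x (act G y u) = act G (x \<otimes>\<^bsub>G\<^esub> y) u"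
  by (induction u) (auto simp: act_def group.gconj_comp)

lemma act_one: "group G \<Longrightarrow> u \<in> LC G \<Longrightarrow> act G \<one>\<^bsub>G\<^esub> u = u"
  by (induction u) (auto simp: act_def group.gconj_one)

lemma act_central: "group G \<Longrightarrow> gcentral G z \<Longrightarrow> u \<in> LC G \<Longrightarrow> act G z u = u"
  by (induction u) (auto simp: act_def group.central_gconj2)

lemma alpha_closed: "group G \<Longrightarrow> x \<in> carrier G \<Longrightarrow> A \<in> carrier (exterior_square G) \<Longrightarrow>
   alpha G x A \<in> carrier (exterior_square G)"
proof -
  assume a: "group G" "x \<in> carrier G" "A \<in> carrier (exterior_square G)"
  then obtain u where u: "u \<in> LC G" "A = cls G u" by (auto simp: E_carrier)
  show ?thesis using a u act_LC[OF a(1,2) u(1)] by (simp add: alpha_cls E_carrier)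
qed

lemma alpha_mult: "group G \<Longrightarrow> x \<in> carrier G \<Longrightarrow> A \<in> carrier (exterior_square G) \<Longrightarrow>
   B \<in> carrier (exterior_square G) \<Longrightarrow>
   alpha G x (A \<otimes>\<^bsub>exterior_square G\<^esub> B) = alpha G x A \<otimes>\<^bsub>exterior_square G\<^esub> alpha G x B"
  by (auto simp: E_carrier alpha_cls E_mult act_append)

lemma alpha_comp: "group G \<Longrightarrow> x \<in> carrier G \<Longrightarrow> y \<in> carrier G \<Longrightarrow> A \<in> carrier (exterior_square G) \<Longrightarrow>
   alpha G x (alpha G y A) = alpha G (x \<otimes>\<^bsub>G\<^esub> y) A"
proof -
  assume a: "group G" "x \<in> carrier G" "y \<in> carrier G" "A \<in> carrier (exterior_square G)"
  then obtain u where u: "u \<in> LC G" "A = cls G u" by (auto simp: E_carrier)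
  show ?thesis using a u act_LC[OF a(1) a(3) u(1)] act_comp[OF a(1-3) u(1)]
    by (simp add: alpha_cls group.subgroupE(4)[OF a(1) group.subgroup_self[OF a(1)]])
qed

lemma alpha_one: "group G \<Longrightarrow> A \<in> carrier (exterior_square G) \<Longrightarrow> alpha G \<one>\<^bsub>G\<^esub> A = A"
proof -
  assume a: "group G" "A \<in> carrier (exterior_square G)"
  then obtain u where u: "u \<in> LC G" "A = cls G u" by (auto simp: E_carrier)
  show ?thesis using a u act_one[OF a(1) u(1)] by (simp add: alpha_cls monoid.one_closed group.is_monoid)
qed

lemma alpha_central: "group G \<Longrightarrow> gcentral G z \<Longrightarrow> A \<in> carrier (exterior_square G) \<Longrightarrow> alpha G z A = A"
proof -
  assume a: "group G" "gcentral G z" "A \<in> carrier (exterior_square G)"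
  then obtain u where u: "u \<in> LC G" "A = cls G u" by (auto simp: E_carrier)
  show ?thesis using a u act_central[OF a(1,2) u(1)] by (simp add: alpha_cls group.central_closed)
qed

lemma alpha_unit: "group G \<Longrightarrow> x \<in> carrier G \<Longrightarrow> alpha G x \<one>\<^bsub>exterior_square G\<^esub> = \<one>\<^bsub>exterior_square G\<^esub>"
  by (simp add: E_one alpha_cls act_def)

lemma alpha_wedge: "group G \<Longrightarrow> x \<in> carrier G \<Longrightarrow> alpha G x (wedge G a b) = wedge G (gconj G x a) (gconj G x b)"
  by (simp add: wedge_cls alpha_cls act_def)

lemma alpha_inv: assumes "group G" "x \<in> carrier G" "A \<in> carrier (exterior_square G)"
  shows "alpha G x (inv\<^bsub>exterior_square G\<^esub> A) = inv\<^bsub>exterior_square G\<^esub> (alpha G x A)"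
proof -
  interpret E: group "exterior_square G" by (rule group_E)
  have "alpha G x (inv\<^bsub>exterior_square G\<^esub> A) \<otimes>\<^bsub>exterior_square G\<^esub> alpha G x A = \<one>\<^bsub>exterior_square G\<^esub>"
    using assms by (simp add: alpha_mult[symmetric] alpha_unit)
  then show ?thesis using assms by (intro E.inv_equality[symmetric]) (auto simp: alpha_closed)
qed

lemma alpha_pow: assumes "group G" "x \<in> carrier G" "A \<in> carrier (exterior_square G)"
  shows "alpha G x (A [^]\<^bsub>exterior_square G\<^esub> (n::nat)) = (alpha G x A) [^]\<^bsub>exterior_square G\<^esub> n"
proof -
  interpret E: group "exterior_square G" by (rule group_E)
  show ?thesis by (induction n) (use assms in \<open>simp_all add: alpha_unit alpha_mult\<close>)
qed

locale xsq = group G for G (structure) +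
  fixes E assumes E_def: "E = exterior_square G"
begin

lemma E_group: "group E" using group_E E_def by simp

sublocale E: group E by (rule E_group)

abbreviation w where "w \<equiv> wedge G"
abbreviation al where "al \<equiv> alpha G"

lemma w_closed [simp]: "a \<in> carrier G \<Longrightarrow> b \<in> carrier G \<Longrightarrow> w a b \<in> carrier E"
  using wedge_closed E_def by simp

lemma al_closed [simp]: "x \<in> carrier G \<Longrightarrow> t \<in> carrier E \<Longrightarrow> al x t \<in> carrier E"
  using alpha_closed[OF is_group] E_def by simp

lemma al_mult: "x \<in> carrier G \<Longrightarrow> s \<in> carrier E \<Longrightarrow> t \<in> carrier E \<Longrightarrow>
   al x (s \<otimes>\<^bsub>E\<^esub> t) = al x s \<otimes>\<^bsub>E\<^esub> al x t"
  using alpha_mult[OF is_group] E_def by simp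

lemma al_comp: "x \<in> carrier G \<Longrightarrow> y \<in> carrier G \<Longrightarrow> t \<in> carrier E \<Longrightarrow> al x (al y t) = al (x \<otimes> y) t"
  using alpha_comp[OF is_group] E_def by simp

lemma al_one: "t \<in> carrier E \<Longrightarrow> al \<one> t = t"
  using alpha_one[OF is_group] E_def by simp

lemma al_central: "gcentral G z \<Longrightarrow> t \<in> carrier E \<Longrightarrow> al z t = t"
  using alpha_central[OF is_group] E_def by simp

lemma al_unit: "x \<in> carrier G \<Longrightarrow> al x \<one>\<^bsub>E\<^esub> = \<one>\<^bsub>E\<^esub>"
  using alpha_unit[OF is_group] E_def by simp

lemma al_inv: "x \<in> carrier G \<Longrightarrow> t \<in> carrier E \<Longrightarrow> al x (inv\<^bsub>E\<^esub> t) = inv\<^bsub>E\<^esub> (al x t)"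
  using alpha_inv[OF is_group] E_def by simp

lemma al_pow: "x \<in> carrier G \<Longrightarrow> t \<in> carrier E \<Longrightarrow> al x (t [^]\<^bsub>E\<^esub> (n::nat)) = (al x t) [^]\<^bsub>E\<^esub> n"
  using alpha_pow[OF is_group] E_def by simp

lemma al_w: "x \<in> carrier G \<Longrightarrow> al x (w a b) = w (gconj G x a) (gconj G x b)"
  using alpha_wedge[OF is_group] by simp

lemma E_mult': "cls G u \<otimes>\<^bsub>E\<^esub> cls G v = cls G (u @ v)"
  using E_mult E_def by simp

lemma relA: assumes "g \<in> carrier G" "g' \<in> carrier G" "h \<in> carrier G"
  shows "w (g \<otimes> g') h = al g (w g' h) \<otimes>\<^bsub>E\<^esub> w g h"
proof -
  have "w (g \<otimes> g') h = cls G [(gconj G g g', gconj G g h, True), (g, h, True)]"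
    unfolding wedge_cls cls_eq_iff using assms by (rule ext_rel.rel_left)
  also have "\<dots> = cls G [(gconj G g g', gconj G g h, True)] \<otimes>\<^bsub>E\<^esub> cls G [(g, h, True)]"
    by (simp add: E_mult')
  finally have c: "w (g \<otimes> g') h = cls G [(gconj G g g', gconj G g h, True)] \<otimes>\<^bsub>E\<^esub> cls G [(g, h, True)]" .
  have e: "al g (w g' h) = w (gconj G g g') (gconj G g h)" by (rule al_w) (fact assms)
  show ?thesis unfolding e using c by (simp add: wedge_cls)
qed

lemma relB: assumes "g \<in> carrier G" "h \<in> carrier G" "h' \<in> carrier G"
  shows "w g (h \<otimes> h') = w g h \<otimes>\<^bsub>E\<^esub> al h (w g h')"
proof -
  have "w g (h \<otimes> h') = cls G [(g, h, True), (gconj G h g, gconj G h h', True)]"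
    unfolding wedge_cls cls_eq_iff using assms by (rule ext_rel.rel_right)
  also have "\<dots> = cls G [(g, h, True)] \<otimes>\<^bsub>E\<^esub> cls G [(gconj G h g, gconj G h h', True)]"
    by (simp add: E_mult')
  finally have c: "w g (h \<otimes> h') = cls G [(g, h, True)] \<otimes>\<^bsub>E\<^esub> cls G [(gconj G h g, gconj G h h', True)]" .
  have e: "al h (w g h') = w (gconj G h g) (gconj G h h')" by (rule al_w) (fact assms)
  show ?thesis unfolding e using c by (simp add: wedge_cls)
qed

lemma diag: "x \<in> carrier G \<Longrightarrow> w x x = \<one>\<^bsub>E\<^esub>"
  unfolding wedge_cls using E_one E_def cls_eq_iff ext_rel.rel_diag by metis

lemma E_induct:
  assumes t: "t \<in> carrier E"
    and one: "P \<one>\<^bsub>E\<^esub>"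
    and step: "\<And>a b s. a \<in> carrier G \<Longrightarrow> b \<in> carrier G \<Longrightarrow> s \<in> carrier E \<Longrightarrow> P s \<Longrightarrow>
        P (w a b \<otimes>\<^bsub>E\<^esub> s) \<and> P (inv\<^bsub>E\<^esub> (w a b) \<otimes>\<^bsub>E\<^esub> s)"
  shows "P t"
proof -
  obtain u where u: "u \<in> LC G" "t = cls G u" using t by (auto simp: E_def E_carrier)
  have "cls G u \<in> carrier E \<and> P (cls G u)" using u(1)
  proof (induction u)
    case Nil then show ?case using one E_one E_def by (metis E.one_closed)
  next
    case (Cons l u)
    obtain a b c where l: "l = (a, b, c)" by (cases l)
    have ab1: "a \<in> carrier G" using Cons l by auto
    have ab2: "b \<in> carrier G" using Cons l by auto
    note ab = ab1 ab2
    have IH: "cls G u \<in> carrier E" "P (cls G u)" using Cons by auto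
    have spl: "cls G (l # u) = cls G [l] \<otimes>\<^bsub>E\<^esub> cls G u" by (simp add: E_mult')
    show ?case
    proof (cases c)
      case True
      then have e: "cls G [l] = w a b" by (simp add: l wedge_cls)
      have s2: "cls G (l # u) = w a b \<otimes>\<^bsub>E\<^esub> cls G u" using spl unfolding e .
      show ?thesis unfolding s2 using step[OF ab IH(1) IH(2)] ab IH by simp
    next
      case False
      have "inv\<^bsub>E\<^esub> (w a b) = cls G (winv [(a, b, True)])"
        unfolding wedge_cls E_def by (rule E_inv_cls) (use ab in auto)
      then have e: "cls G [l] = inv\<^bsub>E\<^esub> (w a b)" by (simp add: l False winv_def)
      have s2: "cls G (l # u) = inv\<^bsub>E\<^esub> (w a b) \<otimes>\<^bsub>E\<^esub> cls G u" using spl unfolding e .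
      show ?thesis unfolding s2 using step[OF ab IH(1) IH(2)] ab IH by simp
    qed
  qed
  then show ?thesis using u by simp
qed

lemma idem_one: "x \<in> carrier E \<Longrightarrow> x = x \<otimes>\<^bsub>E\<^esub> x \<Longrightarrow> x = \<one>\<^bsub>E\<^esub>"
proof -
  assume a: "x \<in> carrier E" "x = x \<otimes>\<^bsub>E\<^esub> x"
  then have "x \<otimes>\<^bsub>E\<^esub> x = x \<otimes>\<^bsub>E\<^esub> \<one>\<^bsub>E\<^esub>" by simp
  then show ?thesis using E.l_cancel[of x x "\<one>\<^bsub>E\<^esub>"] a(1) by simp
qed

lemma w_one_left: "m \<in> carrier G \<Longrightarrow> w \<one> m = \<one>\<^bsub>E\<^esub>"
proof -
  assume m: "m \<in> carrier G"
  have "w \<one> m = al \<one> (w \<one> m) \<otimes>\<^bsub>E\<^esub> w \<one> m" using relA[of \<one> \<one> m] m by simp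
  then have "w \<one> m = w \<one> m \<otimes>\<^bsub>E\<^esub> w \<one> m" using al_one m by simp
  then show ?thesis using idem_one m by simp
qed

lemma w_one_right: "m \<in> carrier G \<Longrightarrow> w m \<one> = \<one>\<^bsub>E\<^esub>"
proof -
  assume m: "m \<in> carrier G"
  have "w m \<one> = w m \<one> \<otimes>\<^bsub>E\<^esub> al \<one> (w m \<one>)" using relB[of m \<one> \<one>] m by simp
  then have "w m \<one> = w m \<one> \<otimes>\<^bsub>E\<^esub> w m \<one>" using al_one m by simp
  then show ?thesis using idem_one m by simp
qed

end

context group begin
lemma inv_from_r: "x \<otimes> y = \<one> \<Longrightarrow> x \<in> carrier G \<Longrightarrow> y \<in> carrier G \<Longrightarrow> y = inv x"
proof -
  assume a: "x \<otimes> y = \<one>" "x \<in> carrier G" "y \<in> carrier G"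
  have "y = inv x \<otimes> (x \<otimes> y)" using a(2,3) by simp
  also have "\<dots> = inv x" using a by simp
  finally show ?thesis .
qed
lemma comm_inv: "a \<otimes> b = c \<otimes> a \<Longrightarrow> a \<in> carrier G \<Longrightarrow> b \<in> carrier G \<Longrightarrow> c \<in> carrier G \<Longrightarrow>
   a \<otimes> inv b = inv c \<otimes> a"
proof -
  assume h: "a \<otimes> b = c \<otimes> a" and c: "a \<in> carrier G" "b \<in> carrier G" "c \<in> carrier G"
  have "a \<otimes> inv b = inv c \<otimes> (c \<otimes> a) \<otimes> inv b" using c by (simp add: m_assoc)
  also have "\<dots> = inv c \<otimes> (a \<otimes> b) \<otimes> inv b" using h by simp
  also have "\<dots> = inv c \<otimes> a" using c by (simp add: m_assoc)
  finally show ?thesis .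
qed
lemma cancel_lr: "a \<otimes> b \<otimes> d = a \<otimes> c \<otimes> d \<Longrightarrow> a \<in> carrier G \<Longrightarrow> b \<in> carrier G \<Longrightarrow> c \<in> carrier G \<Longrightarrow>
  d \<in> carrier G \<Longrightarrow> b = c"
proof -
  assume h: "a \<otimes> b \<otimes> d = a \<otimes> c \<otimes> d" and c: "a \<in> carrier G" "b \<in> carrier G" "c \<in> carrier G" "d \<in> carrier G"
  have "a \<otimes> b = a \<otimes> c" using h r_cancel[of d "a \<otimes> b" "a \<otimes> c"] c by simp
  then show "b = c" using l_cancel[of a b c] c by simp
qed
end

context xsq begin

lemmas Esimps = E.m_assoc E.inv_mult_group E.cancel1 E.cancel2 E.r_inv E.l_inv E.inv_inv

lemma conj_gen: assumes c: "g \<in> carrier G" "h \<in> carrier G" "g' \<in> carrier G" "h' \<in> carrier G"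
  shows "al (g \<otimes> h) (w g' h') \<otimes>\<^bsub>E\<^esub> w g h = w g h \<otimes>\<^bsub>E\<^esub> al (h \<otimes> g) (w g' h')"
proof -
  define W where "W = w (g \<otimes> g') (h \<otimes> h')"
  define A where "A = al g (w g' h)"
  define D where "D = al h (w g h')"
  have cl: "A \<in> carrier E" "D \<in> carrier E" unfolding A_def D_def using c by auto
  have "W = al g (w g' (h \<otimes> h')) \<otimes>\<^bsub>E\<^esub> w g (h \<otimes> h')" unfolding W_def using c by (simp add: relA)
  also have "\<dots> = al g (w g' h \<otimes>\<^bsub>E\<^esub> al h (w g' h')) \<otimes>\<^bsub>E\<^esub> (w g h \<otimes>\<^bsub>E\<^esub> D)"
    unfolding D_def using c by (simp add: relB)
  also have "\<dots> = A \<otimes>\<^bsub>E\<^esub> (al (g \<otimes> h) (w g' h') \<otimes>\<^bsub>E\<^esub> w g h) \<otimes>\<^bsub>E\<^esub> D"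
    unfolding A_def D_def using c by (simp add: al_mult al_comp E.m_assoc)
  finally have e1: "W = A \<otimes>\<^bsub>E\<^esub> (al (g \<otimes> h) (w g' h') \<otimes>\<^bsub>E\<^esub> w g h) \<otimes>\<^bsub>E\<^esub> D" .
  have "W = w (g \<otimes> g') h \<otimes>\<^bsub>E\<^esub> al h (w (g \<otimes> g') h')" unfolding W_def using c by (simp add: relB)
  also have "\<dots> = (A \<otimes>\<^bsub>E\<^esub> w g h) \<otimes>\<^bsub>E\<^esub> al h (al g (w g' h') \<otimes>\<^bsub>E\<^esub> w g h')"
    unfolding A_def using c by (simp add: relA)
  also have "\<dots> = A \<otimes>\<^bsub>E\<^esub> (w g h \<otimes>\<^bsub>E\<^esub> al (h \<otimes> g) (w g' h')) \<otimes>\<^bsub>E\<^esub> D"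
    unfolding A_def D_def using c by (simp add: al_mult al_comp E.m_assoc)
  finally have e2: "W = A \<otimes>\<^bsub>E\<^esub> (w g h \<otimes>\<^bsub>E\<^esub> al (h \<otimes> g) (w g' h')) \<otimes>\<^bsub>E\<^esub> D" .
  show ?thesis using E.cancel_lr[OF e1[symmetric, unfolded e2] cl(1) _ _ cl(2)] c by simp
qed

lemma conj_w: assumes c: "g \<in> carrier G" "h \<in> carrier G" "a \<in> carrier G" "b \<in> carrier G"
  shows "w g h \<otimes>\<^bsub>E\<^esub> w a b = al (gcomm G g h) (w a b) \<otimes>\<^bsub>E\<^esub> w g h"
proof -
  define k where "k = h \<otimes> g"
  have k: "k \<in> carrier G" unfolding k_def using c by simp
  define g' where "g' = gconj G (inv k) a"
  define h' where "h' = gconj G (inv k) b"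
  have cl: "g' \<in> carrier G" "h' \<in> carrier G" unfolding g'_def h'_def using c k by auto
  have e1: "al k (w g' h') = w a b" unfolding g'_def h'_def using c k by (simp add: al_w conj_back)
  have e2: "gcomm G g h \<otimes> k = g \<otimes> h" unfolding k_def using c by (simp add: gexp)
  have e3: "al (g \<otimes> h) (w g' h') = al (gcomm G g h) (w a b)"
    using al_comp[of "gcomm G g h" k "w g' h'"] c k cl e1 e2 by simp
  show ?thesis using conj_gen[OF c(1,2) cl] e1 e3 unfolding k_def by simp
qed

lemma conjE: assumes c: "g \<in> carrier G" "h \<in> carrier G" and t: "t \<in> carrier E"
  shows "w g h \<otimes>\<^bsub>E\<^esub> t = al (gcomm G g h) t \<otimes>\<^bsub>E\<^esub> w g h"
proof (rule E_induct[where P="\<lambda>t. w g h \<otimes>\<^bsub>E\<^esub> t = al (gcomm G g h) t \<otimes>\<^bsub>E\<^esub> w g h", OF t])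
  show "w g h \<otimes>\<^bsub>E\<^esub> \<one>\<^bsub>E\<^esub> = al (gcomm G g h) \<one>\<^bsub>E\<^esub> \<otimes>\<^bsub>E\<^esub> w g h" using c by (simp add: al_unit)
next
  fix a b s assume 2: "a \<in> carrier G" "b \<in> carrier G" "s \<in> carrier E"
    "w g h \<otimes>\<^bsub>E\<^esub> s = al (gcomm G g h) s \<otimes>\<^bsub>E\<^esub> w g h"
  define S where "S = w g h"
  define cc where "cc = gcomm G g h"
  have cl: "S \<in> carrier E" "cc \<in> carrier G" unfolding S_def cc_def using c by auto
  have wab: "w a b \<in> carrier E" using 2 by simp
  have gen: "S \<otimes>\<^bsub>E\<^esub> w a b = al cc (w a b) \<otimes>\<^bsub>E\<^esub> S" unfolding S_def cc_def using conj_w c 2 by simp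
  have IH: "S \<otimes>\<^bsub>E\<^esub> s = al cc s \<otimes>\<^bsub>E\<^esub> S" using 2 unfolding S_def cc_def by simp
  have p1: "S \<otimes>\<^bsub>E\<^esub> (w a b \<otimes>\<^bsub>E\<^esub> s) = al cc (w a b \<otimes>\<^bsub>E\<^esub> s) \<otimes>\<^bsub>E\<^esub> S"
  proof -
    have "S \<otimes>\<^bsub>E\<^esub> (w a b \<otimes>\<^bsub>E\<^esub> s) = (S \<otimes>\<^bsub>E\<^esub> w a b) \<otimes>\<^bsub>E\<^esub> s" using cl wab 2 by (simp add: E.m_assoc)
    also have "\<dots> = al cc (w a b) \<otimes>\<^bsub>E\<^esub> (S \<otimes>\<^bsub>E\<^esub> s)" using gen cl wab 2 by (simp add: E.m_assoc)
    also have "\<dots> = al cc (w a b) \<otimes>\<^bsub>E\<^esub> al cc s \<otimes>\<^bsub>E\<^esub> S" using IH cl wab 2 by (simp add: E.m_assoc)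
    also have "\<dots> = al cc (w a b \<otimes>\<^bsub>E\<^esub> s) \<otimes>\<^bsub>E\<^esub> S" using cl wab 2 by (simp add: al_mult)
    finally show ?thesis .
  qed
  have gen': "S \<otimes>\<^bsub>E\<^esub> inv\<^bsub>E\<^esub> (w a b) = inv\<^bsub>E\<^esub> (al cc (w a b)) \<otimes>\<^bsub>E\<^esub> S"
    using E.comm_inv[OF gen] cl wab by simp
  have p2: "S \<otimes>\<^bsub>E\<^esub> (inv\<^bsub>E\<^esub> (w a b) \<otimes>\<^bsub>E\<^esub> s) = al cc (inv\<^bsub>E\<^esub> (w a b) \<otimes>\<^bsub>E\<^esub> s) \<otimes>\<^bsub>E\<^esub> S"
  proof -
    have "S \<otimes>\<^bsub>E\<^esub> (inv\<^bsub>E\<^esub> (w a b) \<otimes>\<^bsub>E\<^esub> s) = (S \<otimes>\<^bsub>E\<^esub> inv\<^bsub>E\<^esub> (w a b)) \<otimes>\<^bsub>E\<^esub> s" using cl wab 2 by (simp add: E.m_assoc)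
    also have "\<dots> = inv\<^bsub>E\<^esub> (al cc (w a b)) \<otimes>\<^bsub>E\<^esub> (S \<otimes>\<^bsub>E\<^esub> s)" using gen' cl wab 2 by (simp add: E.m_assoc)
    also have "\<dots> = inv\<^bsub>E\<^esub> (al cc (w a b)) \<otimes>\<^bsub>E\<^esub> al cc s \<otimes>\<^bsub>E\<^esub> S" using IH cl wab 2 by (simp add: E.m_assoc)
    also have "\<dots> = al cc (inv\<^bsub>E\<^esub> (w a b) \<otimes>\<^bsub>E\<^esub> s) \<otimes>\<^bsub>E\<^esub> S" using cl wab 2 by (simp add: al_mult al_inv)
    finally show ?thesis .
  qed
  show "w g h \<otimes>\<^bsub>E\<^esub> (w a b \<otimes>\<^bsub>E\<^esub> s) = al (gcomm G g h) (w a b \<otimes>\<^bsub>E\<^esub> s) \<otimes>\<^bsub>E\<^esub> w g h \<and>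
     w g h \<otimes>\<^bsub>E\<^esub> (inv\<^bsub>E\<^esub> (w a b) \<otimes>\<^bsub>E\<^esub> s) = al (gcomm G g h) (inv\<^bsub>E\<^esub> (w a b) \<otimes>\<^bsub>E\<^esub> s) \<otimes>\<^bsub>E\<^esub> w g h"
    using p1 p2 unfolding S_def cc_def by simp
qed

lemma al_comm_fix: "g \<in> carrier G \<Longrightarrow> h \<in> carrier G \<Longrightarrow> al (gcomm G g h) (w g h) = w g h"
  using conjE[of g h "w g h"] E.r_cancel by simp

end

context xsq begin

lemma antisym: assumes c: "a \<in> carrier G" "b \<in> carrier G"
  shows "w b a = inv\<^bsub>E\<^esub> (w a b)"
proof -
  have "\<one>\<^bsub>E\<^esub> = w (a \<otimes> b) (a \<otimes> b)" using diag c by simp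
  also have "\<dots> = al a (w b (a \<otimes> b)) \<otimes>\<^bsub>E\<^esub> w a (a \<otimes> b)" using relA c by simp
  also have "\<dots> = al a (w b a \<otimes>\<^bsub>E\<^esub> al a (w b b)) \<otimes>\<^bsub>E\<^esub> (w a a \<otimes>\<^bsub>E\<^esub> al a (w a b))"
    using relB c by simp
  also have "\<dots> = al a (w b a \<otimes>\<^bsub>E\<^esub> w a b)" using c by (simp add: diag al_unit al_mult)
  finally have "al (inv a) \<one>\<^bsub>E\<^esub> = al (inv a) (al a (w b a \<otimes>\<^bsub>E\<^esub> w a b))" by simp
  then have "w b a \<otimes>\<^bsub>E\<^esub> w a b = \<one>\<^bsub>E\<^esub>" using c by (simp add: al_unit al_comp al_one)
  then show ?thesis using c by (intro E.inv_equality[symmetric]) auto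
qed

lemma w_inv_left: assumes c: "g \<in> carrier G" "m \<in> carrier G"
  shows "w (inv g) m = inv\<^bsub>E\<^esub> (al (inv g) (w g m))"
proof -
  have "\<one>\<^bsub>E\<^esub> = w (inv g \<otimes> g) m" using c w_one_left by simp
  also have "\<dots> = al (inv g) (w g m) \<otimes>\<^bsub>E\<^esub> w (inv g) m" using relA[of "inv g" g m] c by simp
  finally show ?thesis using c E.inv_from_r by simp
qed

lemma conj_al: "g \<in> carrier G \<Longrightarrow> h \<in> carrier G \<Longrightarrow> t \<in> carrier E \<Longrightarrow>
   al (gcomm G g h) t = w g h \<otimes>\<^bsub>E\<^esub> t \<otimes>\<^bsub>E\<^esub> inv\<^bsub>E\<^esub> (w g h)"
  using conjE[of g h t] by (simp add: E.m_assoc)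

lemma v_lemma: assumes c: "g \<in> carrier G" "h \<in> carrier G" "k \<in> carrier G"
  shows "w (gcomm G g h) k = w g h \<otimes>\<^bsub>E\<^esub> inv\<^bsub>E\<^esub> (al k (w g h))"
proof -
  define s where "s = w g h"
  define m where "m = gconj G (inv h) k"
  define y where "y = gconj G h (inv g)"
  have cl: "s \<in> carrier E" "m \<in> carrier G" "y \<in> carrier G" unfolding s_def m_def y_def using c by auto
  have e0: "gcomm G g h = g \<otimes> y" unfolding y_def using c by (simp add: gexp)
  have e1: "w y k = al h (w (inv g) m)" unfolding y_def m_def using c by (simp add: al_w conj_back)
  have e2: "g \<otimes> h \<otimes> inv g = gcomm G g h \<otimes> h" using c by (simp add: gexp)
  have e3: "h \<otimes> m = k \<otimes> h" unfolding m_def using c by (simp add: gexp)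
  have "w g h \<otimes>\<^bsub>E\<^esub> al h (w g m) = w g (h \<otimes> m)" using relB c cl by simp
  also have "\<dots> = w g (k \<otimes> h)" using e3 by simp
  also have "\<dots> = w g k \<otimes>\<^bsub>E\<^esub> al k s" unfolding s_def using relB c by simp
  finally have e4: "s \<otimes>\<^bsub>E\<^esub> al h (w g m) = w g k \<otimes>\<^bsub>E\<^esub> al k s" unfolding s_def .
  have e5: "al h (w g m) = inv\<^bsub>E\<^esub> s \<otimes>\<^bsub>E\<^esub> (w g k \<otimes>\<^bsub>E\<^esub> al k s)"
  proof -
    have "al h (w g m) = inv\<^bsub>E\<^esub> s \<otimes>\<^bsub>E\<^esub> (s \<otimes>\<^bsub>E\<^esub> al h (w g m))" using cl c by simp
    then show ?thesis using e4 by simp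
  qed
  have "al (g \<otimes> h \<otimes> inv g) (w g m) = al (gcomm G g h) (al h (w g m))"
    using e2 al_comp c cl by simp
  also have "\<dots> = s \<otimes>\<^bsub>E\<^esub> al h (w g m) \<otimes>\<^bsub>E\<^esub> inv\<^bsub>E\<^esub> s" unfolding s_def using conj_al c cl by simp
  also have "\<dots> = w g k \<otimes>\<^bsub>E\<^esub> al k s \<otimes>\<^bsub>E\<^esub> inv\<^bsub>E\<^esub> s" unfolding e5 using c cl by (simp add: E.m_assoc)
  finally have e6: "al (g \<otimes> h \<otimes> inv g) (w g m) = w g k \<otimes>\<^bsub>E\<^esub> al k s \<otimes>\<^bsub>E\<^esub> inv\<^bsub>E\<^esub> s" .
  have "w (gcomm G g h) k = al g (w y k) \<otimes>\<^bsub>E\<^esub> w g k" unfolding e0 using relA c cl by simp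
  also have "\<dots> = al g (al h (inv\<^bsub>E\<^esub> (al (inv g) (w g m)))) \<otimes>\<^bsub>E\<^esub> w g k"
    unfolding e1 using w_inv_left c cl by simp
  also have "\<dots> = inv\<^bsub>E\<^esub> (al (g \<otimes> h \<otimes> inv g) (w g m)) \<otimes>\<^bsub>E\<^esub> w g k"
    using c cl by (simp add: al_inv al_comp m_assoc)
  also have "\<dots> = s \<otimes>\<^bsub>E\<^esub> inv\<^bsub>E\<^esub> (al k s)" unfolding e6 using c cl
    by (simp add: E.m_assoc E.inv_mult_group)
  finally show ?thesis unfolding s_def .
qed

lemma dprime: assumes c: "g \<in> carrier G" "h \<in> carrier G" "k \<in> carrier G"
  shows "w k (gcomm G g h) = al k (w g h) \<otimes>\<^bsub>E\<^esub> inv\<^bsub>E\<^esub> (w g h)"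
  using antisym[of "gcomm G g h" k] v_lemma[OF c] c by (simp add: E.inv_mult_group)

lemma w_central_comm: assumes "gcentral G z" "g \<in> carrier G" "h \<in> carrier G"
  shows "w z (gcomm G g h) = \<one>\<^bsub>E\<^esub>"
  using dprime[OF assms(2,3) central_closed[OF assms(1)]] al_central[OF assms(1)] assms by simp

end

context group begin

lemma cmove: "gcentral G c \<Longrightarrow> a \<in> carrier G \<Longrightarrow> b \<in> carrier G \<Longrightarrow> a \<otimes> (c \<otimes> b) = c \<otimes> (a \<otimes> b)"
proof -
  assume c: "gcentral G c" "a \<in> carrier G" "b \<in> carrier G"
  have cc: "c \<in> carrier G" using c by (simp add: gcentral_def)
  have "a \<otimes> (c \<otimes> b) = (a \<otimes> c) \<otimes> b" using c cc by (simp add: m_assoc)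
  also have "\<dots> = (c \<otimes> a) \<otimes> b" using central_comm[OF c(1,2)] by simp
  also have "\<dots> = c \<otimes> (a \<otimes> b)" using c cc by (simp add: m_assoc)
  finally show ?thesis .
qed

lemma central_pow: "gcentral G c \<Longrightarrow> gcentral G (c [^] (k::nat))"
  by (induction k) (simp_all add: central_one central_mult)

lemma central_commute: "gcentral G x \<Longrightarrow> gcentral G y \<Longrightarrow> x \<otimes> y = y \<otimes> x"
  using central_comm central_closed by blast

lemma central_lcomm: "gcentral G x \<Longrightarrow> gcentral G y \<Longrightarrow> z \<in> carrier G \<Longrightarrow> x \<otimes> (y \<otimes> z) = y \<otimes> (x \<otimes> z)"
  using cmove[of y x z] central_closed by simp

lemma pow_split: "x \<in> carrier G \<Longrightarrow> x [^] ((a::nat) + b) = x [^] a \<otimes> x [^] b"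
  by (simp add: nat_pow_mult)

lemma pow_add_assoc: "x \<in> carrier G \<Longrightarrow> y \<in> carrier G \<Longrightarrow>
  x [^] (a::nat) \<otimes> (x [^] b \<otimes> y) = x [^] (a + b) \<otimes> y"
  by (simp add: m_assoc[symmetric] nat_pow_mult)

lemma abstract_main:
  fixes \<alpha> :: "'a \<Rightarrow> 'a" and x0 x1 x2 x3 x4 Z1 Z2 :: 'a and P :: "nat \<Rightarrow> 'a"
  assumes cl: "x0 \<in> carrier G" "x1 \<in> carrier G" "x2 \<in> carrier G"
    and ac: "\<And>a. a \<in> carrier G \<Longrightarrow> \<alpha> a \<in> carrier G"
    and am: "\<And>a b. a \<in> carrier G \<Longrightarrow> b \<in> carrier G \<Longrightarrow> \<alpha> (a \<otimes> b) = \<alpha> a \<otimes> \<alpha> b"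
    and ai: "\<And>a. a \<in> carrier G \<Longrightarrow> \<alpha> (inv a) = inv (\<alpha> a)"
    and ap: "\<And>a k. a \<in> carrier G \<Longrightarrow> \<alpha> (a [^] (k::nat)) = (\<alpha> a) [^] k"
    and a0: "\<alpha> x0 = x1 \<otimes> x0" and a1: "\<alpha> x1 = x2 \<otimes> x1" and a2: "\<alpha> x2 = x3 \<otimes> x2"
    and a3: "\<alpha> x3 = x4 \<otimes> x3" and a4: "\<alpha> x4 = x4"
    and c3: "gcentral G x3" and c4: "gcentral G x4" and cZ1: "gcentral G Z1" and cZ2: "gcentral G Z2"
    and r21: "x2 \<otimes> x1 = x1 \<otimes> x2"
    and r10: "x1 \<otimes> x0 = inv Z1 \<otimes> x0 \<otimes> x1"
    and r20: "x2 \<otimes> x0 = inv Z2 \<otimes> x0 \<otimes> x2"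
    and P0: "P 0 = \<one>" and PS: "\<And>n. P (Suc n) = \<alpha> (P n) \<otimes> x0"
  shows "P n = Z2 [^] (n choose 4) \<otimes> Z1 [^] (n choose 3) \<otimes> x4 [^] (n choose 5) \<otimes> x3 [^] (n choose 4)
     \<otimes> x2 [^] (n choose 3) \<otimes> x1 [^] (n choose 2) \<otimes> x0 [^] n"
proof -
  have x3c: "x3 \<in> carrier G" and x4c: "x4 \<in> carrier G" and Z1c: "Z1 \<in> carrier G" and Z2c: "Z2 \<in> carrier G"
    using c3 c4 cZ1 cZ2 by (auto simp: gcentral_def)
  note cls = cl x3c x4c Z1c Z2c
  have ciZ1: "gcentral G (inv Z1)" and ciZ2: "gcentral G (inv Z2)" using cZ1 cZ2 central_inv by auto
  have r21a: "x2 \<otimes> (x1 \<otimes> y) = x1 \<otimes> (x2 \<otimes> y)" if "y \<in> carrier G" for y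
    using r21 cls that by (simp add: m_assoc[symmetric])
  have r10a: "x1 \<otimes> (x0 \<otimes> y) = inv Z1 \<otimes> (x0 \<otimes> (x1 \<otimes> y))" if "y \<in> carrier G" for y
    using r10 cls that by (simp add: m_assoc[symmetric])
  have r20a: "x2 \<otimes> (x0 \<otimes> y) = inv Z2 \<otimes> (x0 \<otimes> (x2 \<otimes> y))" if "y \<in> carrier G" for y
    using r20 cls that by (simp add: m_assoc[symmetric])
  have r01: "x0 \<otimes> x1 = Z1 \<otimes> (x1 \<otimes> x0)"
  proof -
    have "Z1 \<otimes> (x1 \<otimes> x0) = Z1 \<otimes> (inv Z1 \<otimes> x0 \<otimes> x1)" using r10 by simp
    also have "\<dots> = x0 \<otimes> x1" using cls by (simp add: m_assoc)
    finally show ?thesis by simp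
  qed
  have aZ1: "\<alpha> Z1 = Z1 \<otimes> Z2"
  proof -
    define M where "M = x1 \<otimes> (x0 \<otimes> (x2 \<otimes> x1))"
    have Mc: "M \<in> carrier G" unfolding M_def using cls by simp
    have "\<alpha> (x1 \<otimes> x0) = \<alpha> (inv Z1 \<otimes> x0 \<otimes> x1)" using r10 by simp
    then have e1: "x2 \<otimes> (x1 \<otimes> (x1 \<otimes> x0)) = inv (\<alpha> Z1) \<otimes> M"
      unfolding M_def using cls ac by (simp add: am ai a0 a1 m_assoc)
    have "x2 \<otimes> (x1 \<otimes> (x1 \<otimes> x0)) = x1 \<otimes> (x2 \<otimes> (x1 \<otimes> x0))" using r21a cls by simp
    also have "\<dots> = x1 \<otimes> (x1 \<otimes> (x2 \<otimes> x0))" using r21a cls by simp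
    also have "\<dots> = x1 \<otimes> (x1 \<otimes> (inv Z2 \<otimes> (x0 \<otimes> x2)))" using r20 cls by (simp add: m_assoc)
    also have "\<dots> = inv Z2 \<otimes> (x1 \<otimes> (x1 \<otimes> (x0 \<otimes> x2)))" using cmove[OF ciZ2] cls by simp
    also have "\<dots> = inv Z2 \<otimes> (x1 \<otimes> (inv Z1 \<otimes> (x0 \<otimes> (x1 \<otimes> x2))))" using r10a cls by simp
    also have "\<dots> = inv Z2 \<otimes> (inv Z1 \<otimes> (x1 \<otimes> (x0 \<otimes> (x1 \<otimes> x2))))" using cmove[OF ciZ1] cls by simp
    also have "\<dots> = (inv Z2 \<otimes> inv Z1) \<otimes> M" unfolding M_def using r21 cls by (simp add: m_assoc)
    finally have e2: "inv (\<alpha> Z1) \<otimes> M = (inv Z2 \<otimes> inv Z1) \<otimes> M" using e1 by simp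
    have "inv (\<alpha> Z1) = inv Z2 \<otimes> inv Z1" using r_cancel[of M "inv (\<alpha> Z1)" "inv Z2 \<otimes> inv Z1"] e2 Mc cls ac by simp
    also have "\<dots> = inv (Z1 \<otimes> Z2)" using cls by (simp add: inv_mult_group)
    finally show ?thesis using ac cls inv_inv by (metis m_closed)
  qed
  have aZ2: "\<alpha> Z2 = Z2"
  proof -
    define M where "M = x1 \<otimes> (x0 \<otimes> (x3 \<otimes> x2))"
    have Mc: "M \<in> carrier G" unfolding M_def using cls by simp
    have "\<alpha> (x2 \<otimes> x0) = \<alpha> (inv Z2 \<otimes> x0 \<otimes> x2)" using r20 by simp
    then have e1: "x3 \<otimes> (x2 \<otimes> (x1 \<otimes> x0)) = inv (\<alpha> Z2) \<otimes> M"
      unfolding M_def using cls ac by (simp add: am ai a0 a2 m_assoc)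
    have "x3 \<otimes> (x2 \<otimes> (x1 \<otimes> x0)) = x3 \<otimes> (x1 \<otimes> (x2 \<otimes> x0))" using r21a cls by simp
    also have "\<dots> = x3 \<otimes> (x1 \<otimes> (inv Z2 \<otimes> (x0 \<otimes> x2)))" using r20 cls by (simp add: m_assoc)
    also have "\<dots> = x3 \<otimes> (inv Z2 \<otimes> (x1 \<otimes> (x0 \<otimes> x2)))" using cmove[OF ciZ2] cls by simp
    also have "\<dots> = inv Z2 \<otimes> (x3 \<otimes> (x1 \<otimes> (x0 \<otimes> x2)))" using cmove[OF ciZ2] cls by simp
    also have "\<dots> = inv Z2 \<otimes> (x1 \<otimes> (x3 \<otimes> (x0 \<otimes> x2)))" using cmove[OF c3] cls by simp
    also have "\<dots> = inv Z2 \<otimes> (x1 \<otimes> (x0 \<otimes> (x3 \<otimes> x2)))" using cmove[OF c3] cls by simp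
    finally have e2: "inv (\<alpha> Z2) \<otimes> M = inv Z2 \<otimes> M" using e1 unfolding M_def by simp
    have "inv (\<alpha> Z2) = inv Z2" using r_cancel[of M "inv (\<alpha> Z2)" "inv Z2"] e2 Mc cls ac by simp
    then show ?thesis using ac cls inv_inv by metis
  qed
  have sub: "x0 [^] k \<otimes> x1 = Z1 [^] k \<otimes> (x1 \<otimes> x0 [^] k)" for k :: nat
  proof (induction k)
    case 0 then show ?case using cls by simp
  next
    case (Suc k)
    have "x0 [^] Suc k \<otimes> x1 = x0 [^] k \<otimes> (x0 \<otimes> x1)" using cls by (simp add: m_assoc)
    also have "\<dots> = x0 [^] k \<otimes> (Z1 \<otimes> (x1 \<otimes> x0))" using r01 by simp
    also have "\<dots> = Z1 \<otimes> (x0 [^] k \<otimes> x1) \<otimes> x0" using cmove[OF cZ1] cls by (simp add: m_assoc)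
    also have "\<dots> = Z1 \<otimes> (Z1 [^] k \<otimes> (x1 \<otimes> x0 [^] k)) \<otimes> x0" using Suc by simp
    also have "\<dots> = (Z1 [^] k \<otimes> Z1) \<otimes> (x1 \<otimes> (x0 [^] k \<otimes> x0))" using cls cmove[OF cZ1, of "Z1 [^] k" "x1 \<otimes> (x0 [^] k \<otimes> x0)"]
      by (simp add: m_assoc)
    finally show ?case by simp
  qed
  have p10: "(x1 \<otimes> x0) [^] k = Z1 [^] (k choose 2) \<otimes> (x1 [^] k \<otimes> x0 [^] k)" for k :: nat
  proof (induction k)
    case 0 then show ?case using cls by (simp add: numeral_2_eq_2)
  next
    case (Suc k)
    have "(x1 \<otimes> x0) [^] Suc k = Z1 [^] (k choose 2) \<otimes> (x1 [^] k \<otimes> (x0 [^] k \<otimes> x1)) \<otimes> x0"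
      using Suc cls by (simp add: m_assoc)
    also have "\<dots> = Z1 [^] (k choose 2) \<otimes> (x1 [^] k \<otimes> (Z1 [^] k \<otimes> (x1 \<otimes> x0 [^] k))) \<otimes> x0"
      using sub by simp
    also have "\<dots> = Z1 [^] (k choose 2) \<otimes> (Z1 [^] k \<otimes> (x1 [^] k \<otimes> (x1 \<otimes> x0 [^] k))) \<otimes> x0"
      using cmove[OF central_pow[OF cZ1], of "x1 [^] k" "x1 \<otimes> x0 [^] k"] cls by simp
    also have "\<dots> = Z1 [^] ((k choose 2) + k) \<otimes> ((x1 [^] k \<otimes> x1) \<otimes> (x0 [^] k \<otimes> x0))"
      using cls by (simp add: m_assoc pow_add_assoc)
    also have "\<dots> = Z1 [^] (Suc k choose 2) \<otimes> (x1 [^] Suc k \<otimes> x0 [^] Suc k)"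
    proof -
      have "Suc k choose 2 = (k choose 2) + k" by (simp add: numeral_2_eq_2 binomial_Suc_Suc)
      then show ?thesis by simp
    qed
    finally show ?case .
  qed
  show ?thesis
  proof (induction n)
    case 0 then show ?case using P0 cls by (simp add: binomial_eq_0)
  next
    case (Suc n)
    define b2 where "b2 = n choose 2"
    define b3 where "b3 = n choose 3"
    define b4 where "b4 = n choose 4"
    define b5 where "b5 = n choose 5"
    have s2: "Suc n choose 2 = b2 + n" unfolding b2_def using binomial_Suc_Suc[of n 1] by (simp add: eval_nat_numeral)
    have s3: "Suc n choose 3 = b3 + b2" unfolding b2_def b3_def using binomial_Suc_Suc[of n 2] by (simp add: eval_nat_numeral)
    have s4: "Suc n choose 4 = b4 + b3" unfolding b4_def b3_def using binomial_Suc_Suc[of n 3] by (simp add: eval_nat_numeral)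
    have s5: "Suc n choose 5 = b5 + b4" unfolding b5_def b4_def using binomial_Suc_Suc[of n 4] by (simp add: eval_nat_numeral)
    define K where "K = Z2 [^] b4 \<otimes> Z1 [^] b3 \<otimes> x4 [^] b5 \<otimes> x3 [^] b4"
    define N where "N = x2 [^] b3 \<otimes> x1 [^] b2 \<otimes> x0 [^] n"
    have Kc: "K \<in> carrier G" and Nc: "N \<in> carrier G" unfolding K_def N_def using cls by auto
    have Y: "P n = K \<otimes> N" using Suc.IH cls unfolding K_def N_def b2_def b3_def b4_def b5_def
      by (simp add: m_assoc)
    have aK: "\<alpha> K = Z2 [^] b4 \<otimes> (Z1 [^] b3 \<otimes> Z2 [^] b3) \<otimes> x4 [^] b5 \<otimes> (x4 [^] b4 \<otimes> x3 [^] b4)"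
      unfolding K_def using cls
      by (simp add: am ap aZ1 aZ2 a3 a4 pow_mult_distrib[OF central_commute[OF cZ1 cZ2]]
         pow_mult_distrib[OF central_commute[OF c4 c3]])
    have x32: "x3 \<otimes> x2 = x2 \<otimes> x3" using central_comm[OF c3] cls by simp
    have aN: "\<alpha> N = (x3 [^] b3 \<otimes> x2 [^] b3) \<otimes> (x2 [^] b2 \<otimes> x1 [^] b2) \<otimes> (Z1 [^] b2 \<otimes> (x1 [^] n \<otimes> x0 [^] n))"
      unfolding N_def using cls
      by (simp add: am ap a0 a1 a2 pow_mult_distrib[OF x32] pow_mult_distrib[OF r21] p10 b2_def)
    define R where "R = x1 [^] n \<otimes> (x0 [^] n \<otimes> x0)"
    have Rc: "R \<in> carrier G" unfolding R_def using cls by simp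
    have cz: "gcentral G (Z1 [^] b2)" using central_pow[OF cZ1] .
    have nc: "\<alpha> N \<otimes> x0 = (x3 [^] b3 \<otimes> Z1 [^] b2) \<otimes> (x2 [^] (Suc n choose 3) \<otimes> x1 [^] (Suc n choose 2) \<otimes> x0 [^] Suc n)"
    proof -
      have "\<alpha> N \<otimes> x0 = x3 [^] b3 \<otimes> (x2 [^] b3 \<otimes> (x2 [^] b2 \<otimes> (x1 [^] b2 \<otimes> (Z1 [^] b2 \<otimes> R))))"
        unfolding aN R_def using cls by (simp add: m_assoc)
      also have "\<dots> = x3 [^] b3 \<otimes> (Z1 [^] b2 \<otimes> (x2 [^] b3 \<otimes> (x2 [^] b2 \<otimes> (x1 [^] b2 \<otimes> R))))"
        using cls Rc cmove[OF cz, of "x1 [^] b2" R] cmove[OF cz, of "x2 [^] b2" "x1 [^] b2 \<otimes> R"]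
          cmove[OF cz, of "x2 [^] b3" "x2 [^] b2 \<otimes> (x1 [^] b2 \<otimes> R)"] by simp
      also have "\<dots> = (x3 [^] b3 \<otimes> Z1 [^] b2) \<otimes> (x2 [^] (Suc n choose 3) \<otimes> x1 [^] (Suc n choose 2) \<otimes> x0 [^] Suc n)"
        unfolding s3 s2 R_def using cls by (simp add: m_assoc pow_split)
      finally show ?thesis .
    qed
    have kc: "\<alpha> K \<otimes> (x3 [^] b3 \<otimes> Z1 [^] b2) = Z2 [^] (Suc n choose 4) \<otimes> Z1 [^] (Suc n choose 3) \<otimes> x4 [^] (Suc n choose 5) \<otimes> x3 [^] (Suc n choose 4)"
      unfolding aK s3 s4 s5 using cls
      by (simp add: pow_split m_assoc central_commute central_lcomm central_pow cZ1 cZ2 c3 c4)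
    have "P (Suc n) = \<alpha> K \<otimes> (\<alpha> N \<otimes> x0)" using PS Y Kc Nc ac cls by (simp add: am m_assoc)
    also have "\<dots> = (\<alpha> K \<otimes> (x3 [^] b3 \<otimes> Z1 [^] b2)) \<otimes> (x2 [^] (Suc n choose 3) \<otimes> x1 [^] (Suc n choose 2) \<otimes> x0 [^] Suc n)"
      unfolding nc using cls Kc ac by (simp add: m_assoc)
    also have "\<dots> = Z2 [^] (Suc n choose 4) \<otimes> Z1 [^] (Suc n choose 3) \<otimes> x4 [^] (Suc n choose 5) \<otimes> x3 [^] (Suc n choose 4)
     \<otimes> x2 [^] (Suc n choose 3) \<otimes> x1 [^] (Suc n choose 2) \<otimes> x0 [^] Suc n"
      unfolding kc using cls by (simp add: m_assoc)
    finally show ?case .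
  qed
qed

end

context group begin
lemma gcomm_one_commute: "a \<in> carrier G \<Longrightarrow> b \<in> carrier G \<Longrightarrow> gcomm G a b = \<one> \<Longrightarrow> a \<otimes> b = b \<otimes> a"
proof -
  assume c: "a \<in> carrier G" "b \<in> carrier G" "gcomm G a b = \<one>"
  have "(a \<otimes> b) \<otimes> (inv a \<otimes> inv b) = \<one>" using c by (simp add: gcomm_def m_assoc)
  then have "inv a \<otimes> inv b = inv (a \<otimes> b)" using c inv_from_r by simp
  then have "inv (inv a \<otimes> inv b) = a \<otimes> b" using c by simp
  then show ?thesis using c by (simp add: inv_mult_group)
qed

lemma lc5_facts:
  assumes lc5: "lower_central G 5 = {\<one>}"
  shows lc4_central: "\<And>y. y \<in> lower_central G 4 \<Longrightarrow> gcentral G y"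
    and lc3_C4: "\<And>y. y \<in> lower_central G 3 \<Longrightarrow> C4 G y"
    and lc2_C3: "\<And>y. y \<in> lower_central G 2 \<Longrightarrow> C3 G y"
    and lc4_comm_one: "\<And>x y. x \<in> carrier G \<Longrightarrow> y \<in> lower_central G 4 \<Longrightarrow> gcomm G x y = \<one>"
proof -
  have l5: "lower_central G (Suc 4) = {\<one>}" using lc5 by (simp add: eval_nat_numeral)
  show one: "gcomm G x y = \<one>" if "x \<in> carrier G" "y \<in> lower_central G 4" for x y
    using lc_comm[OF that, unfolded l5] by simp
  show cen: "gcentral G y" if "y \<in> lower_central G 4" for y
    using comm_one_central[of y] one that lc_carrier by blast
  show c4: "C4 G y" if "y \<in> lower_central G 3" for y
  proof -
    have "gcomm G x y \<in> lower_central G 4" if "x \<in> carrier G" for x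
      using lc_comm[OF that \<open>y \<in> lower_central G 3\<close>] by (simp add: eval_nat_numeral)
    then show ?thesis using cen that lc_carrier by (auto simp: C4_def)
  qed
  show "C3 G y" if "y \<in> lower_central G 2" for y
  proof -
    have "gcomm G x y \<in> lower_central G 3" if "x \<in> carrier G" for x
      using lc_comm[OF that \<open>y \<in> lower_central G 2\<close>] by (simp add: eval_nat_numeral)
    then show ?thesis using c4 that lc_carrier by (auto simp: C3_def)
  qed
qed
end

context xsq begin

lemma F1: "g \<in> carrier G \<Longrightarrow> c \<in> carrier G \<Longrightarrow> al g (w g c) = w g (gcomm G g c) \<otimes>\<^bsub>E\<^esub> w g c"
proof -
  assume c: "g \<in> carrier G" "c \<in> carrier G"
  have e1: "gconj G g g = g" using c by (simp add: gexp)
  have e2: "gconj G g c = gcomm G g c \<otimes> c" using c by (simp add: gexp)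
  have "al g (w g c) = w g (gcomm G g c \<otimes> c)" using al_w c e1 e2 by simp
  also have "\<dots> = w g (gcomm G g c) \<otimes>\<^bsub>E\<^esub> al (gcomm G g c) (w g c)" using relB c by simp
  also have "\<dots> = w g (gcomm G g c) \<otimes>\<^bsub>E\<^esub> w g c" using al_comm_fix c by simp
  finally show ?thesis .
qed

lemma centralE: assumes "a \<in> carrier G" "b \<in> carrier G" "\<And>t. t \<in> carrier E \<Longrightarrow> al (gcomm G a b) t = t"
  shows "gcentral E (w a b)"
  unfolding gcentral_def using conjE assms by auto

lemma main_concrete:
  assumes lc5: "lower_central G 5 = {\<one>}" and g: "g \<in> carrier G" and h: "h \<in> carrier G"
  shows "w (g [^] n) h =
     (w (gcomm G g h) (gcomm G g (gcomm G g (gcomm G g h)))) [^]\<^bsub>E\<^esub> (n choose 4)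
     \<otimes>\<^bsub>E\<^esub> (w (gcomm G g h) (gcomm G g (gcomm G g h))) [^]\<^bsub>E\<^esub> (n choose 3)
     \<otimes>\<^bsub>E\<^esub> (w g (gcomm G g (gcomm G g (gcomm G g (gcomm G g h))))) [^]\<^bsub>E\<^esub> (n choose 5)
     \<otimes>\<^bsub>E\<^esub> (w g (gcomm G g (gcomm G g (gcomm G g h)))) [^]\<^bsub>E\<^esub> (n choose 4)
     \<otimes>\<^bsub>E\<^esub> (w g (gcomm G g (gcomm G g h))) [^]\<^bsub>E\<^esub> (n choose 3)
     \<otimes>\<^bsub>E\<^esub> (w g (gcomm G g h)) [^]\<^bsub>E\<^esub> (n choose 2)
     \<otimes>\<^bsub>E\<^esub> (w g h) [^]\<^bsub>E\<^esub> n"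
proof -
  define c1 where "c1 = gcomm G g h"
  define c2 where "c2 = gcomm G g c1"
  define c3 where "c3 = gcomm G g c2"
  define c4 where "c4 = gcomm G g c3"
  have cc: "c1 \<in> carrier G" "c2 \<in> carrier G" "c3 \<in> carrier G" "c4 \<in> carrier G"
    unfolding c1_def c2_def c3_def c4_def using g h by auto
  have l1: "c1 \<in> lower_central G 1" unfolding c1_def using lc_comm[of g h 0] g h by simp
  have l2: "c2 \<in> lower_central G 2" unfolding c2_def using lc_comm[OF g l1] by (simp add: eval_nat_numeral)
  have l3: "c3 \<in> lower_central G 3" unfolding c3_def using lc_comm[OF g l2] by (simp add: eval_nat_numeral)
  have l4: "c4 \<in> lower_central G 4" unfolding c4_def using lc_comm[OF g l3] by (simp add: eval_nat_numeral)
  have c5: "gcomm G g c4 = \<one>" using lc4_comm_one[OF lc5 g l4] .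
  have cen4: "gcentral G c4" using lc4_central[OF lc5 l4] .
  have C43: "C4 G c3" using lc3_C4[OF lc5 l3] .
  have C32: "C3 G c2" using lc2_C3[OF lc5 l2] .
  have g5: "gcomm G c1 c3 = \<one>" unfolding c1_def using G5[OF C43 g h] .
  have g6: "gcentral G (gcomm G c1 c2)" unfolding c1_def using G6[OF C32 g h] .
  define x0 where "x0 = w g h"
  define x1 where "x1 = w g c1"
  define x2 where "x2 = w g c2"
  define x3 where "x3 = w g c3"
  define x4 where "x4 = w g c4"
  define Z1 where "Z1 = w c1 c2"
  define Z2 where "Z2 = w c1 c3"
  have xc: "x0 \<in> carrier E" "x1 \<in> carrier E" "x2 \<in> carrier E"
    unfolding x0_def x1_def x2_def using g h cc by auto
  have a0: "al g x0 = x1 \<otimes>\<^bsub>E\<^esub> x0" unfolding x0_def x1_def c1_def using F1 g h by simp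
  have a1: "al g x1 = x2 \<otimes>\<^bsub>E\<^esub> x1" unfolding x1_def x2_def c2_def using F1 g cc by simp
  have a2: "al g x2 = x3 \<otimes>\<^bsub>E\<^esub> x2" unfolding x2_def x3_def c3_def using F1 g cc by simp
  have a3: "al g x3 = x4 \<otimes>\<^bsub>E\<^esub> x3" unfolding x3_def x4_def c4_def using F1 g cc by simp
  have a4: "al g x4 = x4" unfolding x4_def using F1[OF g cc(4)] c5 w_one_right g cc by simp
  have cx3: "gcentral E x3" unfolding x3_def c4_def[symmetric]
    by (rule centralE) (use g cc al_central[OF cen4] c4_def in auto)
  have cx4: "gcentral E x4" unfolding x4_def
    by (rule centralE) (use g cc c5 al_one in auto)
  have cZ1: "gcentral E Z1" unfolding Z1_def
    by (rule centralE) (use g cc al_central[OF g6] in auto)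
  have cZ2: "gcentral E Z2" unfolding Z2_def
    by (rule centralE) (use g cc g5 al_one in auto)
  have r21: "x2 \<otimes>\<^bsub>E\<^esub> x1 = x1 \<otimes>\<^bsub>E\<^esub> x2"
  proof -
    have e1: "gconj G c3 g = inv c4 \<otimes> g" unfolding c4_def using g cc by (simp add: gexp)
    have cm: "c1 \<otimes> c3 = c3 \<otimes> c1" using gcomm_one_commute[OF cc(1) cc(3) g5] .
    have "gconj G c3 c1 = c1 \<otimes> c3 \<otimes> inv c3" unfolding gconj_def using cm by simp
    also have "\<dots> = c1" using cc by (simp add: m_assoc)
    finally have e2: "gconj G c3 c1 = c1" .
    have ci4: "gcentral G (inv c4)" using central_inv[OF cen4] .
    have "al c3 x1 = w (inv c4 \<otimes> g) c1" unfolding x1_def using al_w cc e1 e2 by simp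
    also have "\<dots> = al (inv c4) (w g c1) \<otimes>\<^bsub>E\<^esub> w (inv c4) c1" using relA g cc by simp
    also have "\<dots> = x1" unfolding x1_def c1_def
      using al_central[OF ci4] w_central_comm[OF ci4 g h] g h by simp
    finally have "al c3 x1 = x1" .
    then show ?thesis using conjE[of g c2 x1] g cc xc unfolding x2_def c3_def by simp
  qed
  have r10: "x1 \<otimes>\<^bsub>E\<^esub> x0 = inv\<^bsub>E\<^esub> Z1 \<otimes>\<^bsub>E\<^esub> x0 \<otimes>\<^bsub>E\<^esub> x1"
  proof -
    have "w c2 c1 = al c2 x0 \<otimes>\<^bsub>E\<^esub> inv\<^bsub>E\<^esub> x0" unfolding x0_def c1_def using dprime g h cc by simp
    then have "al c2 x0 = w c2 c1 \<otimes>\<^bsub>E\<^esub> x0" using xc cc by (simp add: E.m_assoc)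
    then have "al c2 x0 = inv\<^bsub>E\<^esub> Z1 \<otimes>\<^bsub>E\<^esub> x0" unfolding Z1_def using antisym[of c1 c2] cc by simp
    then show ?thesis using conjE[of g c1 x0] g cc xc unfolding x1_def c2_def by simp
  qed
  have r20: "x2 \<otimes>\<^bsub>E\<^esub> x0 = inv\<^bsub>E\<^esub> Z2 \<otimes>\<^bsub>E\<^esub> x0 \<otimes>\<^bsub>E\<^esub> x2"
  proof -
    have "w c3 c1 = al c3 x0 \<otimes>\<^bsub>E\<^esub> inv\<^bsub>E\<^esub> x0" unfolding x0_def c1_def using dprime g h cc by simp
    then have "al c3 x0 = w c3 c1 \<otimes>\<^bsub>E\<^esub> x0" using xc cc by (simp add: E.m_assoc)
    then have "al c3 x0 = inv\<^bsub>E\<^esub> Z2 \<otimes>\<^bsub>E\<^esub> x0" unfolding Z2_def using antisym[of c1 c3] cc by simp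
    then show ?thesis using conjE[of g c2 x0] g cc xc unfolding x2_def c3_def by simp
  qed
  have P0: "w (g [^] (0::nat)) h = \<one>\<^bsub>E\<^esub>" using w_one_left h by simp
  have PS: "w (g [^] Suc k) h = al g (w (g [^] k) h) \<otimes>\<^bsub>E\<^esub> x0" for k :: nat
    unfolding x0_def nat_pow_Suc2[OF g] using relA[of g "g [^] k" h] g h by simp
  have "w (g [^] n) h = Z2 [^]\<^bsub>E\<^esub> (n choose 4) \<otimes>\<^bsub>E\<^esub> Z1 [^]\<^bsub>E\<^esub> (n choose 3) \<otimes>\<^bsub>E\<^esub> x4 [^]\<^bsub>E\<^esub> (n choose 5)
     \<otimes>\<^bsub>E\<^esub> x3 [^]\<^bsub>E\<^esub> (n choose 4) \<otimes>\<^bsub>E\<^esub> x2 [^]\<^bsub>E\<^esub> (n choose 3) \<otimes>\<^bsub>E\<^esub> x1 [^]\<^bsub>E\<^esub> (n choose 2)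
     \<otimes>\<^bsub>E\<^esub> x0 [^]\<^bsub>E\<^esub> n"
    by (rule E.abstract_main[where \<alpha> = "al g" and P = "\<lambda>k. w (g [^] k) h"])
       (use xc g al_mult al_inv al_pow a0 a1 a2 a3 a4 cx3 cx4 cZ1 cZ2 r21 r10 r20 P0 PS in auto)
  then show ?thesis unfolding Z1_def Z2_def x0_def x1_def x2_def x3_def x4_def c1_def c2_def c3_def c4_def .
qed

end

theorem theorem3p3:
  fixes G (structure) and g h :: 'a and n :: nat
  assumes "group G" and "nilpotent_of_class G 5"
    and "g \<in> carrier G" and "h \<in> carrier G"
  shows "wedge G (g [^] n) h =
     (wedge G (gcomm G g h) (gcomm G g (gcomm G g (gcomm G g h)))) [^]\<^bsub>exterior_square G\<^esub> (n choose 4)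
     \<otimes>\<^bsub>exterior_square G\<^esub> (wedge G (gcomm G g h) (gcomm G g (gcomm G g h))) [^]\<^bsub>exterior_square G\<^esub> (n choose 3)
     \<otimes>\<^bsub>exterior_square G\<^esub> (wedge G g (gcomm G g (gcomm G g (gcomm G g (gcomm G g h))))) [^]\<^bsub>exterior_square G\<^esub> (n choose 5)
     \<otimes>\<^bsub>exterior_square G\<^esub> (wedge G g (gcomm G g (gcomm G g (gcomm G g h)))) [^]\<^bsub>exterior_square G\<^esub> (n choose 4)
     \<otimes>\<^bsub>exterior_square G\<^esub> (wedge G g (gcomm G g (gcomm G g h))) [^]\<^bsub>exterior_square G\<^esub> (n choose 3)
     \<otimes>\<^bsub>exterior_square G\<^esub> (wedge G g (gcomm G g h)) [^]\<^bsub>exterior_square G\<^esub> (n choose 2)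
     \<otimes>\<^bsub>exterior_square G\<^esub> (wedge G g h) [^]\<^bsub>exterior_square G\<^esub> n"
proof -
  interpret X: xsq G "exterior_square G" by (rule xsq.intro[OF assms(1)]) (simp add: xsq_axioms_def)
  have lc5: "lower_central G 5 = {\<one>}" using assms(2) by (simp add: nilpotent_of_class_def)
  show ?thesis using X.main_concrete[OF lc5 assms(3,4)] .
qed

end
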